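(* Let $A(z)=\sum_{n\ge0}\Big(\sum_{P}\operatorname{amp}(P)\Big)z^n$, where the inner sum runs over all Motzkin paths $P$ of length $n$. Then $$A(z)=-(1+v+v^2)(1-v^{-2})\sum_{h\ge1}\frac{v^{h}}{1-v^{h}}-\frac{(1+2v)(1+v+v^2)}{v}.$$
   Context: A Motzkin path of length $n$ is a sequence of $n$ steps, each an up-step $(1,1)$, a down-step $(1,-1)$ or a horizontal step $(1,0)$, starting at $(0,0)$, ending at $(n,0)$, and never going below the $x$-axis. Its height $h$ is the maximal $y$-coordinate reached. A horizontal step on level $j$ is a horizontal step from $(x,j)$ to $(x+1,j)$. The amplitude $\operatorname{amp}(P)$ of a Motzkin path $P$ of height $h$ is $2h+1$ if $P$ has a horizontal step on level $h$, and $2h$ otherwise. Here $v=v(z)=\frac{1-z-\sqrt{1-2z-3z^2}}{2z}$ is the formal power series with $v(0)=0$ satisfying $z=\frac{v}{1+v+v^2}$. *)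

theory Defs
  imports "HOL-Computational_Algebra.Formal_Power_Series"
          "HOL-Computational_Algebra.Formal_Laurent_Series"
begin

(* A path of length n is a list of n steps; step +1 = up (1,1), -1 = down (1,-1),
   0 = horizontal (1,0). *)

definition level :: "int list \<Rightarrow> nat \<Rightarrow> int" where
  "level P i = sum_list (take i P)"

definition motzkin_path :: "int list \<Rightarrow> bool" where
  "motzkin_path P \<longleftrightarrow> set P \<subseteq> {-1, 0, 1} \<and> sum_list P = 0
     \<and> (\<forall>i\<le>length P. level P i \<ge> 0)"

definition motzkin_paths :: "nat \<Rightarrow> int list set" where
  "motzkin_paths n = {P. length P = n \<and> motzkin_path P}"

definition path_height :: "int list \<Rightarrow> int" where
  "path_height P = Max {level P i | i. i \<le> length P}"

definition has_horizontal_at :: "int list \<Rightarrow> int \<Rightarrow> bool" where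
  "has_horizontal_at P j \<longleftrightarrow> (\<exists>i<length P. P ! i = 0 \<and> level P i = j)"

definition amp :: "int list \<Rightarrow> int" where
  "amp P = (if has_horizontal_at P (path_height P) then 2 * path_height P + 1
            else 2 * path_height P)"

definition amp_gf :: "real fps" where
  "amp_gf = Abs_fps (\<lambda>n. real_of_int (\<Sum>P\<in>motzkin_paths n. amp P))"

definition vser :: "real fps" where
  "vser = (THE v. fps_nth v 0 = 0 \<and> fps_X = v / (1 + v + v^2))"

end

theory Submission
  imports Defs
begin

fun vc :: "nat \<Rightarrow> real" where
  "vc 0 = 0"
| "vc (Suc n) = (if n = 0 then 1 else 0) + vc n + (\<Sum>i\<le>n. vc i * vc (n - i))"

definition VV :: "real fps" where "VV = Abs_fps vc"

lemma phi_div: "(g::real fps) $ 0 \<noteq> 0 \<Longrightarrow> fps_to_fls (f / g) = fps_to_fls f / fps_to_fls g"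
  by (rule fls_divide_fps_to_fls[symmetric]) (simp add: subdegree_eq_0)

lemma VV_eq: "VV = fps_X * (1 + VV + VV^2)"
proof (rule fps_ext)
  fix n show "VV $ n = (fps_X * (1 + VV + VV^2)) $ n"
  proof (cases n)
    case 0 then show ?thesis by (simp add: VV_def)
  next
    case (Suc m) then show ?thesis
      apply (simp only: fps_X_mult_nth)
      by (simp add: VV_def power2_eq_square fps_mult_nth atMost_atLeast0)
  qed
qed

lemma VV_unique:
  assumes "w $ 0 = 0" "w = fps_X * (1 + w + w^2)"
  shows "w = VV"
proof -
  have "\<forall>m\<le>n. w $ m = vc m" for n
  proof (induction n)
    case 0 then show ?case using assms(1) by simp
  next
    case (Suc n)
    have "w $ Suc n = (fps_X * (1 + w + w^2)) $ Suc n" using assms(2) by metis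
    also have "\<dots> = (if n = 0 then 1 else 0) + w $ n + (\<Sum>i\<le>n. w $ i * w $ (n - i))"
      apply (simp only: fps_X_mult_nth)
      by (simp add: power2_eq_square fps_mult_nth atMost_atLeast0)
    also have "\<dots> = vc (Suc n)" using Suc.IH by simp
    finally show ?case using Suc.IH le_Suc_eq by auto
  qed
  then show ?thesis by (auto simp: VV_def fps_eq_iff)
qed

lemma div_iff: 
  fixes w :: "real fps"
  assumes "w $ 0 = 0"
  shows "(fps_X = w / (1 + w + w^2)) \<longleftrightarrow> w = fps_X * (1 + w + w^2)"
proof -
  have n0: "(1 + w + w^2) $ 0 \<noteq> 0" using assms by (simp add: power2_eq_square fps_mult_nth)
  hence nz: "fps_to_fls (1 + w + w^2) \<noteq> 0" by (metis fps_to_fls_eq_0_iff fps_zero_nth)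
  have "(fps_X = w / (1 + w + w^2)) \<longleftrightarrow> fps_to_fls fps_X = fps_to_fls (w / (1 + w + w^2))" by (simp only: fps_to_fls_eq_iff)
  also have "\<dots> \<longleftrightarrow> fps_to_fls fps_X = fps_to_fls w / fps_to_fls (1 + w + w^2)" using phi_div[OF n0] by simp
  also have "\<dots> \<longleftrightarrow> fps_to_fls w = fps_to_fls fps_X * fps_to_fls (1 + w + w^2)" using nz
    by (auto simp: field_simps)
  also have "\<dots> \<longleftrightarrow> w = fps_X * (1 + w + w^2)" by (simp only: fls_times_fps_to_fls[symmetric] fps_to_fls_eq_iff)
  finally show ?thesis .
qed

lemma vser_eq: "vser = VV"
  unfolding vser_def
proof (rule the_equality)
  show "VV $ 0 = 0 \<and> fps_X = VV / (1 + VV + VV^2)"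
    using div_iff[of VV] VV_eq by (simp add: VV_def)
  fix w :: "real fps" assume "w $ 0 = 0 \<and> fps_X = w / (1 + w + w^2)"
  then show "w = VV" using div_iff[of w] VV_unique by blast
qed

fun okf :: "int \<Rightarrow> int \<Rightarrow> int list \<Rightarrow> bool" where
  "okf b l [] = (2 * l \<le> b)"
| "okf b l (s # xs) = (2 * l \<le> b \<and> (s = 0 \<longrightarrow> 2 * l + 1 \<le> b) \<and> okf b (l + s) xs)"

fun gef :: "int \<Rightarrow> int list \<Rightarrow> bool" where
  "gef l [] = (0 \<le> l)"
| "gef l (s # xs) = (0 \<le> l \<and> gef (l + s) xs)"

definition mz :: "int list \<Rightarrow> bool" where
  "mz P \<longleftrightarrow> set P \<subseteq> {-1, 0, 1} \<and> sum_list P = 0 \<and> gef 0 P"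

definition SS :: "int \<Rightarrow> nat \<Rightarrow> int list set" where
  "SS b n = {P. length P = n \<and> mz P \<and> okf b 0 P}"

lemma level_0 [simp]: "level P 0 = 0" by (simp add: level_def)
lemma level_Cons_Suc [simp]: "level (s # xs) (Suc i) = s + level xs i" by (simp add: level_def)

lemma all_le_Suc: "(\<forall>i\<le>Suc n. P i) \<longleftrightarrow> P 0 \<and> (\<forall>i\<le>n. P (Suc i))"
  by (metis Suc_le_mono le0 not0_implies_Suc)
lemma all_less_Suc: "(\<forall>i<Suc n. P i) \<longleftrightarrow> P 0 \<and> (\<forall>i<n. P (Suc i))"
  by (metis Suc_less_eq not0_implies_Suc zero_less_Suc)

lemma gef_iff: "gef l P \<longleftrightarrow> (\<forall>i\<le>length P. 0 \<le> l + level P i)"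
proof (induction P arbitrary: l)
  case Nil then show ?case by simp
next
  case (Cons s xs)
  show ?case unfolding length_Cons all_le_Suc using Cons.IH[of "l+s"] by (simp add: add.assoc)
qed

lemma okf_iff: "okf b l P \<longleftrightarrow> (\<forall>i\<le>length P. 2 * (l + level P i) \<le> b) \<and>
    (\<forall>i<length P. P ! i = 0 \<longrightarrow> 2 * (l + level P i) + 1 \<le> b)"
proof (induction P arbitrary: l)
  case Nil then show ?case by simp
next
  case (Cons s xs)
  show ?case unfolding length_Cons all_le_Suc all_less_Suc using Cons.IH[of "l+s"]
    by (auto simp add: add.assoc)
qed

lemma motzkin_iff: "motzkin_path P \<longleftrightarrow> mz P"
  by (simp add: motzkin_path_def mz_def gef_iff)

lemma okf_ge: "okf b l xs \<Longrightarrow> 2 * l \<le> b" by (cases xs) auto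
lemma gef_ge: "gef l xs \<Longrightarrow> 0 \<le> l" by (cases xs) auto

lemma okf_mono: "okf b l xs \<Longrightarrow> b \<le> b' \<Longrightarrow> okf b' l xs"
  by (induction xs arbitrary: l) auto
lemma gef_mono: "gef l xs \<Longrightarrow> l \<le> l' \<Longrightarrow> gef l' xs"
  by (induction xs arbitrary: l l') auto

lemma okf_shift: "okf b (l + 1) xs \<longleftrightarrow> okf (b - 2) l xs"
proof (induction xs arbitrary: l)
  case Nil then show ?case by auto
next
  case (Cons s xs)
  have e: "l + 1 + s = (l + s) + 1" by simp
  show ?case using Cons.IH[of "l+s"] unfolding okf.simps e by auto
qed

lemma okf_append: "okf b l (xs @ ys) \<longleftrightarrow> okf b l xs \<and> okf b (l + sum_list xs) ys"
  by (induction xs arbitrary: l) (auto simp: algebra_simps dest: okf_ge)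
lemma gef_append: "gef l (xs @ ys) \<longleftrightarrow> gef l xs \<and> gef (l + sum_list xs) ys"
  by (induction xs arbitrary: l) (auto simp: algebra_simps dest: gef_ge)

lemma first_passage:
  "set xs \<subseteq> {-1, 0, 1} \<Longrightarrow> sum_list xs < 0 \<Longrightarrow>
    \<exists>q r. xs = q @ (-1) # r \<and> gef 0 q \<and> sum_list q = 0"
proof (induction "length xs" arbitrary: xs rule: less_induct)
  case less
  then obtain s ys where xs: "xs = s # ys" by (cases xs) auto
  have s: "s \<in> {-1,0,1}" and ys: "set ys \<subseteq> {-1,0,1}" using less.prems xs by auto
  consider "s = -1" | "s = 0" | "s = 1" using s by auto
  then show ?case
  proof cases
    case 1 then show ?thesis using xs by (intro exI[of _ "[]"] exI[of _ ys]) auto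
  next
    case 2
    then obtain q r where "ys = q @ (-1) # r" "gef 0 q" "sum_list q = 0"
      using less.hyps[of ys] less.prems xs ys by auto
    then show ?thesis using xs 2 by (intro exI[of _ "0 # q"] exI[of _ r]) auto
  next
    case 3
    then obtain q1 r1 where h1: "ys = q1 @ (-1) # r1" "gef 0 q1" "sum_list q1 = 0"
      using less.hyps[of ys] less.prems xs ys by auto
    have r1: "set r1 \<subseteq> {-1,0,1}" "sum_list r1 < 0" "length r1 < length xs"
      using h1 ys less.prems xs 3 by auto
    then obtain q2 r2 where h2: "r1 = q2 @ (-1) # r2" "gef 0 q2" "sum_list q2 = 0"
      using less.hyps[of r1] by auto
    have "gef 1 q1" using h1(2) gef_mono by fastforce
    then have "gef 0 (1 # q1 @ (-1) # q2)" using h1 h2 by (simp add: gef_append)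
    then show ?thesis using xs 3 h1 h2
      by (intro exI[of _ "1 # q1 @ (-1) # q2"] exI[of _ r2]) auto
  qed
qed

lemma sum_list_ge: "set xs \<subseteq> {-1, 0, 1} \<Longrightarrow> - int (length xs) \<le> sum_list xs"
  by (induction xs) auto

lemma mz_bound_aux:
  "set xs \<subseteq> {-1, 0, 1} \<Longrightarrow> gef l xs \<Longrightarrow> l + sum_list xs = 0 \<Longrightarrow> okf (int (length xs) + l) l xs"
proof (induction xs arbitrary: l)
  case Nil then show ?case by simp
next
  case (Cons s ys)
  have s: "s \<in> {-1,0,1}" using Cons.prems by auto
  have ih: "okf (int (length ys) + (l + s)) (l + s) ys" using Cons by auto
  have "- int (length ys) \<le> sum_list ys" using Cons.prems sum_list_ge by auto
  then show ?case using ih s Cons.prems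
    by (auto elim!: okf_mono)
qed

lemma mz_bound: "mz P \<Longrightarrow> okf (int (length P)) 0 P"
  using mz_bound_aux[of P 0] by (simp add: mz_def)

lemma amp_iff: "amp P \<le> b \<longleftrightarrow> okf b 0 P"
proof -
  let ?L = "{level P i | i. i \<le> length P}"
  have fin: "finite ?L" by simp
  have ne: "?L \<noteq> {}" by auto
  define H where "H = path_height P"
  have Hin: "H \<in> ?L" unfolding H_def path_height_def using Max_in[OF fin ne] .
  have Hge: "\<And>i. i \<le> length P \<Longrightarrow> level P i \<le> H"
    unfolding H_def path_height_def using fin by (intro Max_ge) auto
  show ?thesis
  proof
    assume a: "amp P \<le> b"
    have "2 * H \<le> amp P" by (simp add: amp_def H_def)
    show "okf b 0 P" unfolding okf_iff
    proof safe
      fix i assume "i \<le> length P"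
      then show "2 * (0 + level P i) \<le> b" using Hge[of i] a \<open>2 * H \<le> amp P\<close> by simp
    next
      fix i assume i: "i < length P" "P ! i = 0"
      show "2 * (0 + level P i) + 1 \<le> b"
      proof (cases "level P i = H")
        case True
        then have "has_horizontal_at P H" using i unfolding has_horizontal_at_def by auto
        then show ?thesis using a True by (simp add: amp_def H_def)
      next
        case False
        then show ?thesis using Hge[of i] i a \<open>2 * H \<le> amp P\<close> by simp
      qed
    qed
  next
    assume o: "okf b 0 P"
    from Hin obtain j where j: "j \<le> length P" "H = level P j" by auto
    have "2 * H \<le> b" using o j unfolding okf_iff by auto
    moreover have "has_horizontal_at P H \<Longrightarrow> 2 * H + 1 \<le> b"
      using o unfolding okf_iff has_horizontal_at_def by auto
    ultimately show "amp P \<le> b" by (auto simp: amp_def H_def)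
  qed
qed

lemma amp_nonneg: "0 \<le> amp P"
  using amp_iff[of P "-1"] by (cases P) auto

lemma finite_SS: "finite (SS b n)"
proof (rule finite_subset)
  show "SS b n \<subseteq> {xs. set xs \<subseteq> {-1,0,1} \<and> length xs = n}" by (auto simp: SS_def mz_def)
  show "finite {xs. set xs \<subseteq> {-1,0,1::int} \<and> length xs = n}"
    by (rule finite_lists_length_eq) simp
qed

lemma SS_0: "SS b 0 = (if 0 \<le> b then {[]} else {})"
  by (auto simp: SS_def mz_def)

lemma mz_arch: "mz q \<Longrightarrow> mz r \<Longrightarrow> mz (1 # q @ (-1) # r)"
proof -
  assume q: "mz q" and r: "mz r"
  have "gef 1 q" using q gef_mono by (fastforce simp: mz_def)
  then show ?thesis using q r by (auto simp: mz_def gef_append)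
qed

lemma okf_arch: "sum_list q = 0 \<Longrightarrow> okf b 0 (1 # q @ (-1) # r) \<longleftrightarrow> okf (b - 2) 0 q \<and> okf b 0 r"
  using okf_shift[of b 0 q] by (auto simp: okf_append dest: okf_ge)

lemma arch_inj:
  assumes "mz q" "mz q'" "q @ (-1) # r = q' @ (-1) # r'"
  shows "q = q' \<and> r = r'"
proof -
  have no: False if "mz a" "mz c" "a = c @ (-1) # t" for a c t
  proof -
    have "gef 0 a" "sum_list c = 0" using that by (auto simp: mz_def)
    then have "gef (-1) t" using that(3) by (simp add: gef_append)
    then show False using gef_ge by fastforce
  qed
  from assms(3) obtain us where
    "(q = q' @ us \<and> us @ (-1) # r = (-1) # r') \<or> (q @ us = q' \<and> (-1) # r = us @ (-1) # r')"
    by (auto simp: append_eq_append_conv2)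
  then show ?thesis
  proof
    assume h: "q = q' @ us \<and> us @ (-1) # r = (-1) # r'"
    show ?thesis
    proof (cases us)
      case Nil then show ?thesis using h by auto
    next
      case (Cons u t) then show ?thesis using h no[OF assms(1,2), of t] by auto
    qed
  next
    assume h: "q @ us = q' \<and> (-1) # r = us @ (-1) # r'"
    show ?thesis
    proof (cases us)
      case Nil then show ?thesis using h by auto
    next
      case (Cons u t) then show ?thesis using h no[OF assms(2,1), of t] by auto
    qed
  qed
qed

definition arch :: "int list \<times> int list \<Rightarrow> int list" where
  "arch = (\<lambda>(q, r). 1 # q @ (-1) # r)"

lemma SS_Suc: "SS b (Suc n) = (if 1 \<le> b then (#) 0 ` SS b n else {}) \<union>
   (\<Union>i<n. arch ` (SS (b - 2) i \<times> SS b (n - 1 - i)))" (is "?L = ?A \<union> ?B")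
proof
  show "?A \<union> ?B \<subseteq> ?L"
  proof
    fix P assume "P \<in> ?A \<union> ?B"
    then show "P \<in> ?L"
    proof
      assume "P \<in> ?A"
      then show ?thesis by (auto simp: SS_def mz_def split: if_splits)
    next
      assume "P \<in> ?B"
      then obtain i q r where i: "i < n" "q \<in> SS (b - 2) i" "r \<in> SS b (n - 1 - i)" "P = arch (q, r)"
        by auto
      then have "mz q" "mz r" "sum_list q = 0" by (auto simp: SS_def mz_def)
      then show ?thesis using i mz_arch okf_arch by (auto simp: SS_def arch_def)
    qed
  qed
next
  show "?L \<subseteq> ?A \<union> ?B"
  proof
    fix P assume P: "P \<in> ?L"
    then obtain s ys where Ps: "P = s # ys" by (cases P) (auto simp: SS_def)
    have mP: "mz P" and oP: "okf b 0 P" and lP: "length ys = n" using P Ps by (auto simp: SS_def)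
    have s: "s \<in> {-1,0,1}" "set ys \<subseteq> {-1,0,1}" using mP Ps by (auto simp: mz_def)
    consider "s = -1" | "s = 0" | "s = 1" using s by auto
    then show "P \<in> ?A \<union> ?B"
    proof cases
      case 1 then show ?thesis using mP Ps gef_ge by (fastforce simp: mz_def)
    next
      case 2
      then have "1 \<le> b" "ys \<in> SS b n" using mP oP Ps lP by (auto simp: mz_def SS_def)
      then show ?thesis using Ps 2 by auto
    next
      case 3
      then have "sum_list ys < 0" using mP Ps by (auto simp: mz_def)
      then obtain q r where qr: "ys = q @ (-1) # r" "gef 0 q" "sum_list q = 0"
        using first_passage s(2) by blast
      have mq: "mz q" using qr s(2) by (auto simp: mz_def)
      have "gef 1 ys" using mP Ps 3 by (auto simp: mz_def)
      then have "gef 0 r" using qr by (simp add: gef_append)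
      then have mr: "mz r" using qr s(2) mP Ps 3 by (auto simp: mz_def)
      have ok: "okf (b - 2) 0 q" "okf b 0 r" using oP Ps 3 qr okf_arch by auto
      have len: "length q < n" "length r = n - 1 - length q" using lP qr by auto
      have "P = arch (q, r)" using Ps 3 qr by (simp add: arch_def)
      moreover have "(q, r) \<in> SS (b - 2) (length q) \<times> SS b (n - 1 - length q)"
        using mq mr ok len by (auto simp: SS_def)
      ultimately show ?thesis using len by blast
    qed
  qed
qed

lemma card_SS_Suc: "card (SS b (Suc n)) = (if 1 \<le> b then card (SS b n) else 0) +
    (\<Sum>i<n. card (SS (b - 2) i) * card (SS b (n - 1 - i)))"
proof -
  have injarch: "inj_on arch (SS (b - 2) i \<times> SS b j)" for i j
    by (rule inj_onI) (auto simp: arch_def SS_def dest: arch_inj)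
  have fin: "finite (arch ` (SS (b - 2) i \<times> SS b (n - 1 - i)))" for i
    using finite_SS by auto
  have disj: "(arch ` (SS (b - 2) i \<times> SS b (n - 1 - i))) \<inter> (arch ` (SS (b - 2) j \<times> SS b (n - 1 - j))) = {}"
    if "i \<noteq> j" for i j
    using that by (auto simp: arch_def SS_def dest: arch_inj)
  have cB: "card (\<Union>i<n. arch ` (SS (b - 2) i \<times> SS b (n - 1 - i))) =
      (\<Sum>i<n. card (SS (b - 2) i) * card (SS b (n - 1 - i)))"
  proof -
    have "card (\<Union>i<n. arch ` (SS (b - 2) i \<times> SS b (n - 1 - i))) =
      (\<Sum>i<n. card (arch ` (SS (b - 2) i \<times> SS b (n - 1 - i))))"
      apply (rule card_UN_disjoint)
        apply simp
      using fin apply blast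
      using disj apply blast
      done
    then show ?thesis by (simp only: card_image[OF injarch] card_cartesian_product)
  qed
  have dAB: "((if 1 \<le> b then (#) 0 ` SS b n else {}) \<inter> (\<Union>i<n. arch ` (SS (b - 2) i \<times> SS b (n - 1 - i)))) = {}"
    by (auto simp: arch_def)
  have cA: "card (if 1 \<le> b then (#) 0 ` SS b n else {}) = (if 1 \<le> b then card (SS b n) else 0)"
    by (auto simp: card_image)
  show ?thesis unfolding SS_Suc
    by (subst card_Un_disjoint) (use dAB cA cB fin finite_SS in auto)
qed

definition QQ :: "real fps" where "QQ = 1 + vser + vser^2"
definition DD :: "nat \<Rightarrow> real fps" where "DD j = QQ * (1 - vser^j) / (1 - vser^(j+2))"
definition Cg :: "nat \<Rightarrow> real fps" where "Cg j = Abs_fps (\<lambda>n. real (card (SS (int j - 1) n)))"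

lemma v0: "vser $ 0 = 0" by (simp add: vser_eq VV_def)
lemma v1: "vser $ 1 = 1" by (simp add: vser_eq VV_def)
lemma vX: "vser = fps_X * QQ"
  unfolding QQ_def using VV_eq vser_eq by simp

lemma vpow_nth: "n < k \<Longrightarrow> (vser ^ k) $ n = 0"
  by (simp add: vX power_mult_distrib fps_X_power_mult_nth)

lemma unit_nth: "k \<ge> 1 \<Longrightarrow> (1 - vser ^ k) $ 0 = 1"
  using vpow_nth[of 0 k] by simp

lemma QQ_nth0: "QQ $ 0 = 1" by (simp add: QQ_def v0 power2_eq_square fps_mult_nth)

abbreviation "w \<equiv> fps_to_fls vser"
abbreviation "q \<equiv> fps_to_fls QQ"

lemma phi_div': "(g::real fps) $ 0 \<noteq> 0 \<Longrightarrow> fps_to_fls (f / g) = fps_to_fls f / fps_to_fls g"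
  by (rule phi_div)

lemma w_nz: "w \<noteq> 0"
proof
  assume "w = 0" then have "vser = 0" by simp
  then show False using v1 by simp
qed

lemma unit_nz: "k \<ge> 1 \<Longrightarrow> 1 - w ^ k \<noteq> 0"
proof
  assume "k \<ge> 1" "1 - w ^ k = 0"
  then have "fps_to_fls (1 - vser ^ k) = 0" by (simp add: fps_to_fls_power)
  then have "1 - vser ^ k = 0" by simp
  then show False using unit_nth[OF \<open>k \<ge> 1\<close>] by simp
qed

lemma q_eq: "q = 1 + w + w^2"
  by (simp add: QQ_def fps_to_fls_power)
lemma q_nz: "q \<noteq> 0"
  using QQ_nth0 by (metis fps_to_fls_eq_0_iff fps_zero_nth zero_neq_one)
lemma xq: "fls_X * q = w"
  by (metis fls_times_fps_to_fls fps_X_to_fls vX)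

lemma phi_DD: "fps_to_fls (DD j) = q * (1 - w^j) / (1 - w^(j+2))"
proof -
  have "(1 - vser^(j+2)) $ 0 = 1" by (rule unit_nth) simp
  then have "(1 - vser^(j+2)) $ 0 \<noteq> 0" by (simp only: one_neq_zero) simp
  then show ?thesis
  unfolding DD_def by (subst phi_div') (simp_all add: fls_times_fps_to_fls fps_to_fls_power)
qed

lemma alg1:
  fixes w a q :: "'a::field"
  assumes q: "q = 1 + w + w^2" and n1: "1 - a * w^2 \<noteq> 0" and n2: "1 - a * w^4 \<noteq> 0" and nq: "q \<noteq> 0"
  shows "q * (1 - a * w^2) / (1 - a * w^4) * (1 - w / q - (w/q)^2 * (q * (1 - a) / (1 - a * w^2))) = 1"
proof -
  have key: "(q - w) * (1 - a * w^2) - w^2 * (1 - a) = 1 - a * w^4"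
    unfolding q by algebra
  have "1 - w / q - (w/q)^2 * (q * (1 - a) / (1 - a * w^2)) = ((q - w) * (1 - a * w^2) - w^2 * (1 - a)) / (q * (1 - a * w^2))"
    using n1 nq by (simp add: field_simps power2_eq_square)
  also have "\<dots> = (1 - a * w^4) / (q * (1 - a * w^2))" by (simp only: key)
  finally show ?thesis using n1 n2 nq by simp
qed

lemma DD_rec: "DD (Suc (Suc j)) * (1 - fps_X - fps_X^2 * DD j) = 1"
proof -
  define a where "a = w ^ j"
  have a2: "w ^ (j+2) = a * w^2" "w ^ (Suc (Suc j) + 2) = a * w^4" "w ^ Suc (Suc j) = a * w^2"
    unfolding a_def by (simp_all only: power_add[symmetric]) (simp_all add: numeral_eq_Suc)
  have n1: "1 - a * w^2 \<noteq> 0" using unit_nz[of "j+2"] a2 by simp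
  have n2: "1 - a * w^4 \<noteq> 0" using unit_nz[of "j+4"] a2 by (simp add: a_def power_add)
  have x: "fls_X = w / q" using xq q_nz by (simp add: field_simps)
  have "fps_to_fls (DD (Suc (Suc j)) * (1 - fps_X - fps_X^2 * DD j)) =
     fps_to_fls (DD (Suc (Suc j))) * (1 - fls_X - fls_X^2 * fps_to_fls (DD j))"
    by (simp add: fls_times_fps_to_fls fps_to_fls_power)
  also have "\<dots> = q * (1 - a * w^2) / (1 - a * w^4) * (1 - w / q - (w/q)^2 * (q * (1 - a) / (1 - a * w^2)))"
    unfolding phi_DD a2 x a_def ..
  also have "\<dots> = 1"
    by (rule alg1[OF q_eq n1 n2 q_nz])
  finally show ?thesis by (metis fps_one_to_fls fps_to_fls_eq_iff)
qed

lemma Cg_nth: "Cg j $ n = real (card (SS (int j - 1) n))" by (simp add: Cg_def)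

lemma Cg_fix: "Cg (Suc (Suc j)) = 1 + fps_X * Cg (Suc (Suc j)) + fps_X^2 * (Cg j * Cg (Suc (Suc j)))"
proof (rule fps_ext)
  fix n
  let ?F = "Cg (Suc (Suc j))" and ?G = "Cg j"
  show "?F $ n = (1 + fps_X * ?F + fps_X^2 * (?G * ?F)) $ n"
  proof (cases n)
    case 0
    then show ?thesis by (simp add: Cg_nth SS_0 fps_X_power_mult_nth)
  next
    case (Suc m)
    have b: "int (Suc (Suc j)) - 1 = int j + 1" "int j + 1 - 2 = int j - 1" by simp_all
    have "?F $ n = real (card (SS (int j + 1) m)) +
        (\<Sum>i<m. real (card (SS (int j - 1) i)) * real (card (SS (int j + 1) (m - 1 - i))))"
      unfolding Cg_nth Suc b(1) card_SS_Suc b(2) by simp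
    also have "\<dots> = (1 + fps_X * ?F + fps_X^2 * (?G * ?F)) $ n"
    proof (cases m)
      case 0 then show ?thesis using Suc by (simp add: fps_X_power_mult_nth Cg_nth SS_0)
    next
      case (Suc k)
      have "(fps_X^2 * (?G * ?F)) $ n = (?G * ?F) $ k"
        using \<open>n = Suc m\<close> Suc by (simp add: fps_X_power_mult_nth)
      also have "\<dots> = (\<Sum>i<m. real (card (SS (int j - 1) i)) * real (card (SS (int j + 1) (m - 1 - i))))"
        unfolding fps_mult_nth Cg_nth b(1) using Suc
        by (simp add: atLeast0AtMost lessThan_Suc_atMost)
      finally show ?thesis using \<open>n = Suc m\<close> Suc by (simp add: Cg_nth b(1) ac_simps)
    qed
    finally show ?thesis .
  qed
qed

lemma Cg_rec: "Cg (Suc (Suc j)) * (1 - fps_X - fps_X^2 * Cg j) = 1"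
proof -
  have "Cg (Suc (Suc j)) * (1 - fps_X - fps_X^2 * Cg j) =
      Cg (Suc (Suc j)) - fps_X * Cg (Suc (Suc j)) - fps_X^2 * (Cg j * Cg (Suc (Suc j)))"
    by (simp add: algebra_simps)
  also have "\<dots> = 1" using Cg_fix[of j] by (simp add: algebra_simps)
  finally show ?thesis .
qed

lemma Cg_0: "Cg 0 = 0"
proof -
  have "SS (-1) i = {}" for i by (auto simp: SS_def dest: okf_ge)
  then show ?thesis by (intro fps_ext) (simp add: Cg_nth)
qed

lemma Cg_1: "Cg 1 = 1"
proof (rule fps_ext)
  fix n show "Cg 1 $ n = 1 $ n"
  proof (cases n)
    case 0 then show ?thesis by (simp add: Cg_nth SS_0)
  next
    case (Suc m)
    have "SS (-2) i = {}" for i by (auto simp: SS_def dest: okf_ge)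
    then show ?thesis using Suc by (simp add: Cg_nth card_SS_Suc)
  qed
qed

lemma DD_0: "DD 0 = 0" by (simp add: DD_def)

lemma DD_1: "DD 1 = 1"
proof -
  have n1: "1 - w \<noteq> 0" using unit_nz[of 1] by simp
  have "fps_to_fls (DD 1) = q * (1 - w^1) / (1 - w^(1+2))" by (rule phi_DD)
  also have "(1::nat) + 2 = 3" by simp
  also have "1 - w^3 = (1 - w) * q" unfolding q_eq by algebra
  also have "w^1 = w" by simp
  also have "q * (1 - w) / ((1 - w) * q) = 1" using n1 q_nz by simp
  finally show ?thesis by (metis fps_one_to_fls fps_to_fls_eq_iff)
qed

lemma inv_uniq: "(a::'a::comm_ring_1) * k = 1 \<Longrightarrow> b * k = 1 \<Longrightarrow> a = b"
  by (metis mult.assoc mult.commute mult_1_right)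

lemma Cg_DD: "Cg j = DD j"
proof -
  have "Cg j = DD j \<and> Cg (Suc j) = DD (Suc j)" for j
  proof (induction j)
    case 0 then show ?case using Cg_1 DD_1 by (simp add: Cg_0 DD_0)
  next
    case (Suc j)
    have "Cg (Suc (Suc j)) = DD (Suc (Suc j))"
    proof -
      have "Cg (Suc (Suc j)) * (1 - fps_X - fps_X^2 * DD j) = 1" using Cg_rec[of j] Suc.IH by simp
      from inv_uniq[OF this DD_rec[of j]] show ?thesis .
    qed
    then show ?case using Suc by simp
  qed
  then show ?thesis by blast
qed

definition TT :: "nat \<Rightarrow> real fps" where
  "TT k = vser ^ (k + 1) * (QQ * (1 - vser^2) / (1 - vser ^ (k + 3)))"

lemma TT_nth: "n \<le> k \<Longrightarrow> TT k $ n = 0"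
  unfolding TT_def fps_mult_nth
proof (intro sum.neutral ballI)
  fix i assume "n \<le> k" "i \<in> {0..n}"
  then have "(vser ^ (k+1)) $ i = 0" by (intro vpow_nth) auto
  then show "(vser ^ (k+1)) $ i * (QQ * (1 - vser\<^sup>2) / (1 - vser ^ (k + 3))) $ (n - i) = 0" by simp
qed

lemma QQ_DD: "QQ - DD (k + 1) = TT k"
proof -
  define a where "a = w ^ (k+1)"
  have a3: "w ^ (k + 1 + 2) = a * w^2" "w ^ (k + 3) = a * w^2"
    unfolding a_def by (simp_all only: power_add[symmetric]) (simp_all add: numeral_eq_Suc)
  have u0: "(1 - vser^(k+3)) $ 0 = 1" by (rule unit_nth) simp
  then have u: "(1 - vser^(k+3)) $ 0 \<noteq> 0" by (simp only: one_neq_zero) simp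
  have n1: "1 - a * w^2 \<noteq> 0" using unit_nz[of "k+3"] a3 by simp
  have "fps_to_fls (QQ - DD (k + 1)) = q - q * (1 - a) / (1 - a * w^2)"
    unfolding fps_to_fls_minus phi_DD a3 a_def ..
  also have "\<dots> = a * (q * (1 - w^2) / (1 - a * w^2))"
    using n1 by (simp add: field_simps)
  also have "\<dots> = fps_to_fls (TT k)"
    unfolding TT_def fls_times_fps_to_fls phi_div'[OF u] using a3
    by (simp add: fls_times_fps_to_fls fps_to_fls_power a_def)
  finally have "fps_to_fls (QQ - DD (k + 1)) = fps_to_fls (TT k)" .
  then show ?thesis by (simp only: fps_to_fls_eq_iff)
qed

lemma MP_eq: "motzkin_paths n = {P. length P = n \<and> mz P}"
  by (simp add: motzkin_paths_def motzkin_iff)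

lemma SS_top: "SS (int n) n = motzkin_paths n"
  using mz_bound by (auto simp: SS_def MP_eq)

lemma finite_MP: "finite (motzkin_paths n)" using finite_SS SS_top by metis

lemma amp_card: "P \<in> motzkin_paths n \<Longrightarrow> amp P = int (card {k. k < n \<and> \<not> okf (int k) 0 P})"
proof -
  assume P: "P \<in> motzkin_paths n"
  have le: "amp P \<le> int n" using P mz_bound amp_iff by (auto simp: MP_eq)
  have ge: "0 \<le> amp P" by (rule amp_nonneg)
  have e: "{k. k < n \<and> \<not> okf (int k) 0 P} = {..< nat (amp P)}"
  proof (intro set_eqI iffI)
    fix k assume "k \<in> {k. k < n \<and> \<not> okf (int k) 0 P}"
    then have "\<not> amp P \<le> int k" using amp_iff by blast
    then show "k \<in> {..< nat (amp P)}" by simp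
  next
    fix k assume "k \<in> {..< nat (amp P)}"
    then have "int k < amp P" by simp
    then have "\<not> okf (int k) 0 P" "k < n" using amp_iff[of P "int k"] le by auto
    then show "k \<in> {k. k < n \<and> \<not> okf (int k) 0 P}" by simp
  qed
  have "card {k. k < n \<and> \<not> okf (int k) 0 P} = nat (amp P)" by (simp only: e card_lessThan)
  then show ?thesis using ge by simp
qed

lemma swap_count:
  fixes n :: nat
  assumes "finite A"
  shows "(\<Sum>P\<in>A. card {k. k < n \<and> R k P}) = (\<Sum>k<n. card {P\<in>A. R k P})"
proof -
  have "(\<Sum>P\<in>A. card {k. k < n \<and> R k P}) = (\<Sum>P\<in>A. \<Sum>k<n. if R k P then 1 else 0)"
  proof (rule sum.cong)
    fix P
    have "{k. k < n \<and> R k P} = {k\<in>{..<n}. R k P}" by auto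
    then have "card {k. k < n \<and> R k P} = (\<Sum>k\<in>{k\<in>{..<n}. R k P}. 1)" by (simp only: card_eq_sum)
    also have "\<dots> = (\<Sum>k<n. if R k P then 1 else 0)" by (simp only: sum.inter_filter[OF finite_lessThan])
    finally show "card {k. k < n \<and> R k P} = (\<Sum>k<n. if R k P then 1 else 0)" .
  qed simp
  also have "\<dots> = (\<Sum>k<n. \<Sum>P\<in>A. if R k P then 1 else 0)" by (rule sum.swap)
  also have "\<dots> = (\<Sum>k<n. card {P\<in>A. R k P})"
  proof (rule sum.cong)
    fix k
    have "card {P\<in>A. R k P} = (\<Sum>P\<in>{P\<in>A. R k P}. 1)" by (rule card_eq_sum)
    also have "\<dots> = (\<Sum>P\<in>A. if R k P then 1 else 0)" by (simp only: sum.inter_filter[OF assms])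
    finally show "(\<Sum>P\<in>A. if R k P then 1 else 0) = card {P\<in>A. R k P}" by (rule sym)
  qed simp
  finally show ?thesis .
qed

lemma card_SS_real: "real (card (SS (int k) n)) = QQ $ n - TT k $ n"
proof -
  have "real (card (SS (int k) n)) = Cg (k + 1) $ n" by (simp add: Cg_nth)
  also have "\<dots> = DD (k + 1) $ n" by (simp add: Cg_DD)
  also have "DD (k + 1) = QQ - TT k" using QQ_DD[of k] by (simp add: algebra_simps)
  also have "(QQ - TT k) $ n = QQ $ n - TT k $ n" by (rule fps_sub_nth)
  finally show ?thesis .
qed

lemma amp_coeff: "amp_gf $ n = (\<Sum>k<n. TT k $ n)"
proof -
  let ?M = "motzkin_paths n"
  have "(\<Sum>P\<in>?M. amp P) = (\<Sum>P\<in>?M. int (card {k. k < n \<and> \<not> okf (int k) 0 P}))"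
    by (rule sum.cong[OF refl]) (rule amp_card)
  also have "\<dots> = int (\<Sum>k<n. card {P\<in>?M. \<not> okf (int k) 0 P})"
    by (simp only: of_nat_sum[symmetric] swap_count[OF finite_MP])
  finally have calc: "(\<Sum>P\<in>?M. amp P) = int (\<Sum>k<n. card {P\<in>?M. \<not> okf (int k) 0 P})" .
  have "amp_gf $ n = real_of_int (\<Sum>P\<in>?M. amp P)" by (simp add: amp_gf_def)
  also have "\<dots> = real_of_int (int (\<Sum>k<n. card {P\<in>?M. \<not> okf (int k) 0 P}))" unfolding calc ..
  also have "\<dots> = (\<Sum>k<n. real (card {P\<in>?M. \<not> okf (int k) 0 P}))"
    by (subst of_int_of_nat_eq) (simp only: of_nat_sum)
  finally have a: "amp_gf $ n = (\<Sum>k<n. real (card {P\<in>?M. \<not> okf (int k) 0 P}))" .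
  have cM: "real (card ?M) = QQ $ n"
  proof -
    have "real (card ?M) = real (card (SS (int n) n))" by (simp only: SS_top)
    also have "\<dots> = QQ $ n - TT n $ n" by (rule card_SS_real)
    also have "TT n $ n = 0" by (rule TT_nth) simp
    finally show ?thesis by simp
  qed
  have kf: "real (card {P\<in>?M. \<not> okf (int k) 0 P}) = TT k $ n" for k
  proof -
    have sub: "SS (int k) n \<subseteq> ?M" by (auto simp: SS_def MP_eq)
    have "{P\<in>?M. \<not> okf (int k) 0 P} = ?M - SS (int k) n" by (auto simp: SS_def MP_eq)
    then have "card {P\<in>?M. \<not> okf (int k) 0 P} = card ?M - card (SS (int k) n)"
      using sub finite_SS by (simp add: card_Diff_subset)
    moreover have "card (SS (int k) n) \<le> card ?M" using sub finite_MP by (rule card_mono[rotated])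
    ultimately have "real (card {P\<in>?M. \<not> okf (int k) 0 P}) = real (card ?M) - real (card (SS (int k) n))"
      by (simp only: of_nat_diff)
    also have "\<dots> = TT k $ n" unfolding cM card_SS_real by simp
    finally show ?thesis .
  qed
  show ?thesis unfolding a by (rule sum.cong[OF refl]) (rule kf)
qed

lemma fps_sums_nth:
  fixes f :: "nat \<Rightarrow> real fps"
  assumes "\<And>h n. n < h \<Longrightarrow> f h $ n = 0"
  shows "f sums Abs_fps (\<lambda>n. \<Sum>h\<le>n. f h $ n)"
  unfolding sums_def
proof (rule tendsto_fpsI)
  fix n
  show "eventually (\<lambda>N. (\<Sum>h<N. f h) $ n = Abs_fps (\<lambda>n. \<Sum>h\<le>n. f h $ n) $ n) sequentially"
    unfolding eventually_sequentially
  proof (intro exI allI impI)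
    fix N assume N: "Suc n \<le> N"
    have "(\<Sum>h<N. f h) $ n = (\<Sum>h<N. f h $ n)" by (rule fps_sum_nth)
    also have "\<dots> = (\<Sum>h\<le>n. f h $ n)"
      by (rule sum.mono_neutral_right) (use N assms in auto)
    finally show "(\<Sum>h<N. f h) $ n = Abs_fps (\<lambda>n. \<Sum>h\<le>n. f h $ n) $ n" by simp
  qed
qed

lemma sums_mult_left_fps:
  fixes f :: "nat \<Rightarrow> real fps"
  assumes "f sums S"
  shows "(\<lambda>h. c * f h) sums (c * S)"
proof -
  have lim: "\<forall>n. eventually (\<lambda>N. (\<Sum>h<N. f h) $ n = S $ n) sequentially"
    using assms unfolding sums_def tendsto_fps_iff .
  show ?thesis unfolding sums_def sum_distrib_left[symmetric]
  proof (rule tendsto_fpsI)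
    fix n
    have "eventually (\<lambda>N. \<forall>i\<in>{0..n}. (\<Sum>h<N. f h) $ i = S $ i) sequentially"
      by (subst eventually_ball_finite_distrib) (use lim in auto)
    then show "eventually (\<lambda>N. (c * (\<Sum>h<N. f h)) $ n = (c * S) $ n) sequentially"
      by eventually_elim (simp add: fps_mult_nth)
  qed
qed

lemma sums_shift_fps:
  fixes f :: "nat \<Rightarrow> real fps"
  assumes "f sums S"
  shows "(\<lambda>h. f (Suc h)) sums (S - f 0)"
proof -
  have lim: "\<forall>n. eventually (\<lambda>N. (\<Sum>h<N. f h) $ n = S $ n) sequentially"
    using assms unfolding sums_def tendsto_fps_iff .
  show ?thesis unfolding sums_def
  proof (rule tendsto_fpsI)
    fix n
    from lim obtain M where M: "\<And>N. N \<ge> M \<Longrightarrow> (\<Sum>h<N. f h) $ n = S $ n"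
      unfolding eventually_sequentially by blast
    show "eventually (\<lambda>N. (\<Sum>h<N. f (Suc h)) $ n = (S - f 0) $ n) sequentially"
      unfolding eventually_sequentially
    proof (intro exI allI impI)
      fix N assume "M \<le> N"
      then have "M \<le> Suc N" by simp
      then have "(\<Sum>h<Suc N. f h) $ n = S $ n" by (rule M)
      moreover have e2: "(\<Sum>h<Suc N. f h) = f 0 + (\<Sum>h<N. f (Suc h))" by (rule sum.lessThan_Suc_shift)
      ultimately have "(f 0 + (\<Sum>h<N. f (Suc h))) $ n = S $ n" by (simp only:)
      then have "f 0 $ n + (\<Sum>h<N. f (Suc h)) $ n = S $ n" by (simp only: fps_add_nth)
      then show "(\<Sum>h<N. f (Suc h)) $ n = (S - f 0) $ n" unfolding fps_sub_nth by linarith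
    qed
  qed
qed

lemma alg2:
  fixes w A q l :: "'a::field"
  assumes nw: "w \<noteq> 0" and n1: "1 - w \<noteq> 0" and n2: "1 - w^2 \<noteq> 0"
    and h: "w^2 * A = q * (1 - w^2) * (l - w/(1 - w) - w^2/(1 - w^2))"
  shows "A = - q * (1 - inverse (w^2)) * l - (1 + 2*w) * q / w"
proof -
  have e: "1 - w^2 = (1 - w) * (1 + w)" by (simp add: power2_eq_square algebra_simps)
  have s1: "(1 - w^2) * (w/(1 - w)) = w * (1 + w)" unfolding e using n1 by simp
  have s2: "(1 - w^2) * (w^2/(1 - w^2)) = w^2" using n2 by simp
  have s3: "w^2 * inverse (w^2) = 1" using nw by simp
  have s4: "w^2 / w = w" using nw by (simp add: power2_eq_square)
  have "w^2 * A = q * (1 - w^2) * l - q * ((1 - w^2) * (w/(1 - w))) - q * ((1 - w^2) * (w^2/(1 - w^2)))"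
    unfolding h by (simp only: algebra_simps)
  also have "\<dots> = q * (1 - w^2) * l - q * (w * (1 + w)) - q * w^2" unfolding s1 s2 ..
  also have "\<dots> = w^2 * (- q * (1 - inverse (w^2)) * l - (1 + 2*w) * q / w)"
  proof -
    define iv where "iv = inverse (w^2)"
    define D where "D = (1 + 2*w) * q / w"
    have s5: "w^2 * D = (1 + 2*w) * q * w" unfolding D_def using nw by (simp add: power2_eq_square)
    have "w^2 * (- q * (1 - iv) * l - D) = - q * (w^2 - w^2 * iv) * l - w^2 * D" by algebra
    also have "\<dots> = - q * (w^2 - 1) * l - (1 + 2*w) * q * w" unfolding s5 iv_def s3 ..
    also have "\<dots> = q * (1 - w^2) * l - q * (w * (1 + w)) - q * w^2" by algebra
    finally show ?thesis unfolding iv_def D_def by simp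
  qed
  finally show ?thesis using nw by simp
qed


definition gg :: "nat \<Rightarrow> real fps" where "gg = (\<lambda>h. vser ^ (Suc h) / (1 - vser ^ (Suc h)))"

lemma unit_ne: "k \<ge> 1 \<Longrightarrow> (1 - vser ^ k) $ 0 \<noteq> 0"
proof -
  assume "k \<ge> 1"
  then have "(1 - vser ^ k) $ 0 = 1" by (rule unit_nth)
  then show ?thesis by (simp only: one_neq_zero) simp
qed

lemma gg_nth: "n < h \<Longrightarrow> gg h $ n = 0"
proof -
  assume "n < h"
  have "gg h = vser ^ (Suc h) * inverse (1 - vser ^ (Suc h))"
    unfolding gg_def by (rule fps_divide_unit) (rule unit_ne, simp)
  also have "\<dots> $ n = 0" unfolding fps_mult_nth
  proof (intro sum.neutral ballI)
    fix i assume "i \<in> {0..n}"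
    then have "(vser ^ (Suc h)) $ i = 0" using \<open>n < h\<close> by (intro vpow_nth) auto
    then show "(vser ^ (Suc h)) $ i * inverse (1 - vser ^ (Suc h)) $ (n - i) = 0" by simp
  qed
  finally show ?thesis .
qed

lemma phi_gg: "fps_to_fls (gg h) = w ^ (Suc h) / (1 - w ^ (Suc h))"
proof -
  have u: "(1 - vser ^ (Suc h)) $ 0 \<noteq> 0" by (rule unit_ne) simp
  show ?thesis unfolding gg_def phi_div'[OF u] fps_to_fls_minus fps_one_to_fls fps_to_fls_power ..
qed

lemma TT_sums: "TT sums amp_gf"
proof -
  have "TT sums Abs_fps (\<lambda>n. \<Sum>h\<le>n. TT h $ n)"
    by (rule fps_sums_nth) (simp add: TT_nth)
  also have "Abs_fps (\<lambda>n. \<Sum>h\<le>n. TT h $ n) = amp_gf"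
  proof (rule fps_ext)
    fix n
    have "(\<Sum>h\<le>n. TT h $ n) = (\<Sum>h<n. TT h $ n) + TT n $ n"
      by (simp add: lessThan_Suc_atMost[symmetric])
    also have "TT n $ n = 0" by (rule TT_nth) simp
    finally show "Abs_fps (\<lambda>n. \<Sum>h\<le>n. TT h $ n) $ n = amp_gf $ n" by (simp add: amp_coeff)
  qed
  finally show ?thesis .
qed

lemma TT_gg: "vser^2 * TT k = (QQ * (1 - vser^2)) * gg (Suc (Suc k))"
proof -
  define a where "a = w ^ k"
  have p: "w ^ (k + 1) = a * w" "w ^ (k + 3) = a * w^3" "w ^ Suc (Suc (Suc k)) = a * w^3"
    unfolding a_def by (simp_all only: power_add[symmetric] power_Suc2[symmetric]) (simp_all add: numeral_eq_Suc)
  have n: "1 - a * w^3 \<noteq> 0" using unit_nz[of "k+3"] p by simp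
  have u: "(1 - vser^(k+3)) $ 0 \<noteq> 0" by (rule unit_ne) simp
  have "fps_to_fls (vser^2 * TT k) = w^2 * (a * w * (q * (1 - w^2) / (1 - a * w^3)))"
    unfolding TT_def fls_times_fps_to_fls phi_div'[OF u] fps_to_fls_power fps_to_fls_minus fps_one_to_fls p ..
  also have "\<dots> = q * (1 - w^2) * (a * w^3 / (1 - a * w^3))"
    using n by (simp add: field_simps power2_eq_square power3_eq_cube)
  also have "\<dots> = fps_to_fls ((QQ * (1 - vser^2)) * gg (Suc (Suc k)))"
    unfolding fls_times_fps_to_fls phi_gg fps_to_fls_power fps_to_fls_minus fps_one_to_fls p ..
  finally show ?thesis by (simp only: fps_to_fls_eq_iff)
qed

theorem mainTheorem3:
  shows "fps_to_fls amp_gf =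
     - fps_to_fls (1 + vser + vser^2) * (1 - inverse (fps_to_fls vser ^ 2))
         * fps_to_fls (\<Sum>h. vser ^ (Suc h) / (1 - vser ^ (Suc h)))
     - fps_to_fls ((1 + 2 * vser) * (1 + vser + vser^2)) / fps_to_fls vser"
proof -
  define L where "L = (\<Sum>h. gg h)"
  define c where "c = QQ * (1 - vser^2)"
  have gs: "gg sums L"
  proof -
    have "gg sums Abs_fps (\<lambda>n. \<Sum>h\<le>n. gg h $ n)" by (rule fps_sums_nth) (rule gg_nth)
    then show ?thesis unfolding L_def by (simp add: sums_iff)
  qed
  have s1: "(\<lambda>k. vser^2 * TT k) sums (vser^2 * amp_gf)" by (rule sums_mult_left_fps[OF TT_sums])
  have s2: "(\<lambda>h. gg (Suc h)) sums (L - gg 0)" by (rule sums_shift_fps[OF gs])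
  have s3: "(\<lambda>h. gg (Suc (Suc h))) sums (L - gg 0 - gg (Suc 0))" using sums_shift_fps[OF s2] by simp
  have s4: "(\<lambda>k. c * gg (Suc (Suc k))) sums (c * (L - gg 0 - gg (Suc 0)))" by (rule sums_mult_left_fps[OF s3])
  have "(\<lambda>k. vser^2 * TT k) = (\<lambda>k. c * gg (Suc (Suc k)))" unfolding c_def by (simp only: TT_gg)
  then have eq: "vser^2 * amp_gf = c * (L - gg 0 - gg (Suc 0))" using s1 s4 sums_unique2 by metis
  have h: "w^2 * fps_to_fls amp_gf = q * (1 - w^2) * (fps_to_fls L - w/(1 - w) - w^2/(1 - w^2))"
  proof -
    have "fps_to_fls (vser^2 * amp_gf) = fps_to_fls (c * (L - gg 0 - gg (Suc 0)))" using eq by (simp only:)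
    then have "w^2 * fps_to_fls amp_gf = q * (1 - w^2) * (fps_to_fls L - w^Suc 0/(1 - w^Suc 0) - w^Suc (Suc 0)/(1 - w^Suc (Suc 0)))"
      unfolding c_def fls_times_fps_to_fls fps_to_fls_minus phi_gg fps_to_fls_power fps_one_to_fls .
    then show ?thesis by (simp only: One_nat_def[symmetric] Suc_1 power_one_right)
  qed
  have nw: "w \<noteq> 0" by (rule w_nz)
  have n1: "1 - w \<noteq> 0" using unit_nz[of 1] by simp
  have n2: "1 - w^2 \<noteq> 0" using unit_nz[of 2] by simp
  have A: "fps_to_fls amp_gf = - q * (1 - inverse (w^2)) * fps_to_fls L - (1 + 2*w) * q / w"
    by (rule alg2[OF nw n1 n2 h])
  have e1: "fps_to_fls (1 + vser + vser^2) = q" by (simp only: QQ_def)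
  have e2: "fps_to_fls ((1 + 2 * vser) * (1 + vser + vser^2)) = (1 + 2 * w) * q"
    by (simp add: fls_times_fps_to_fls QQ_def)
  have e3: "(\<Sum>h. vser ^ (Suc h) / (1 - vser ^ (Suc h))) = L" unfolding L_def gg_def ..
  show ?thesis unfolding e1 e2 e3 A ..
qed

end
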